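(* Let $\Phi:\mathbb{R}\to\mathbb{R}$ be twice continuously differentiable on $[-1,1]$ with $\Phi'(-1)=-1$, $\Phi'(1)=1$, $\Phi''(-1)<1$ and $\Phi''(1)<1$. Then $\Phi''$ has a local maximiser in $(-1,1)$ (i.e. $\Phi'$ has at least one convex-concave turning point in $(-1,1)$). Moreover, if $\Phi'$ has no further turning point in $(-1,1)$, i.e. there is $w_*\in(-1,1)$ such that $\Phi''$ is nondecreasing on $[-1,w_*]$ and nonincreasing on $[w_*,1]$, and if $\Phi(-1)=\Phi(1)$, then $g_\Phi(w)>0$ for all $w\in(-1,1)$.
   Context: $g_\Phi(w):=\int_{-1}^{w}\big(v-\Phi'(v)\big)\,dv=\Phi(-1)-\Phi(w)+\tfrac12w^2-\tfrac12$. *)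

theory Defs
  imports Complex_Main
begin

definition g_Phi :: "(real \<Rightarrow> real) \<Rightarrow> real \<Rightarrow> real" where
  "g_Phi \<Phi> w = \<Phi> (-1) - \<Phi> w + w\<^sup>2 / 2 - 1 / 2"

end

theory Submission
  imports Defs "HOL-Analysis.Analysis"
begin

lemma mvt_gen:
  fixes f f' :: "real \<Rightarrow> real"
  assumes ab: "a < b" "-1 \<le> a" "b \<le> 1"
    and d: "\<And>x. x \<in> {-1..1} \<Longrightarrow> (f has_real_derivative f' x) (at x within {-1..1})"
  shows "\<exists>x\<in>{a<..<b}. f b - f a = f' x * (b - a)"
proof -
  have "\<And>x. \<lbrakk>a \<le> x; x \<le> b\<rbrakk> \<Longrightarrow> (f has_derivative ((*) (f' x))) (at x within {a..b})"
  proof -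
    fix x assume "a \<le> x" "x \<le> b"
    then have "(f has_real_derivative f' x) (at x within {a..b})"
      using d[of x] ab by (auto intro: has_field_derivative_subset[of _ _ _ "{-1..1}"])
    then show "(f has_derivative ((*) (f' x))) (at x within {a..b})"
      unfolding has_field_derivative_def .
  qed
  from mvt_simple[OF ab(1) this] show ?thesis by auto
qed

theorem mainTheorem4:
  fixes \<Phi> \<Phi>1 \<Phi>2 :: "real \<Rightarrow> real"
  assumes d1: "\<And>x. x \<in> {-1..1} \<Longrightarrow> (\<Phi> has_real_derivative \<Phi>1 x) (at x within {-1..1})"
    and d2: "\<And>x. x \<in> {-1..1} \<Longrightarrow> (\<Phi>1 has_real_derivative \<Phi>2 x) (at x within {-1..1})"
    and c2: "continuous_on {-1..1} \<Phi>2"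
    and b1: "\<Phi>1 (-1) = -1" and b2: "\<Phi>1 1 = 1"
    and b3: "\<Phi>2 (-1) < 1" and b4: "\<Phi>2 1 < 1"
  shows "(\<exists>x\<in>{-1<..<1}. \<exists>e>0. \<forall>y\<in>{-1..1}. \<bar>y - x\<bar> < e \<longrightarrow> \<Phi>2 y \<le> \<Phi>2 x)
       \<and> ((\<exists>ws\<in>{-1<..<1}. mono_on {-1..ws} \<Phi>2 \<and> antimono_on {ws..1} \<Phi>2)
            \<and> \<Phi> (-1) = \<Phi> 1
          \<longrightarrow> (\<forall>w\<in>{-1<..<1}. g_Phi \<Phi> w > 0))"
proof (intro conjI impI)
  obtain \<xi> where "\<xi> \<in> {-1<..<1}" "\<Phi>1 1 - \<Phi>1 (-1) = \<Phi>2 \<xi> * (1 - (-1))"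
    using mvt_gen[of "-1" 1 \<Phi>1 \<Phi>2] d2 by auto
  then have xi: "\<xi> \<in> {-1..1}" "\<Phi>2 \<xi> = 1" using b1 b2 by auto
  obtain x where x: "x \<in> {-1..1}" "\<forall>y\<in>{-1..1}. \<Phi>2 y \<le> \<Phi>2 x"
    using continuous_attains_sup[OF compact_Icc _ c2] by auto
  have "\<Phi>2 x \<ge> 1" using x xi by force
  then have "x \<noteq> -1" "x \<noteq> 1" using b3 b4 by auto
  with x show "\<exists>x\<in>{-1<..<1}. \<exists>e>0. \<forall>y\<in>{-1..1}. \<bar>y - x\<bar> < e \<longrightarrow> \<Phi>2 y \<le> \<Phi>2 x"
    by (intro bexI[of _ x] exI[of _ 1]) auto
next
  assume A: "(\<exists>ws\<in>{-1<..<1}. mono_on {-1..ws} \<Phi>2 \<and> antimono_on {ws..1} \<Phi>2) \<and> \<Phi> (-1) = \<Phi> 1"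
  then obtain ws where ws: "ws \<in> {-1<..<1}" "mono_on {-1..ws} \<Phi>2" "antimono_on {ws..1} \<Phi>2"
    and eq: "\<Phi> (-1) = \<Phi> 1" by auto
  define h where "h x = x - \<Phi>1 x" for x
  define G where "G = g_Phi \<Phi>"
  have dh: "\<And>x. x \<in> {-1..1} \<Longrightarrow> (h has_real_derivative (1 - \<Phi>2 x)) (at x within {-1..1})"
    unfolding h_def by (auto intro!: derivative_eq_intros d2)
  have dG: "\<And>x. x \<in> {-1..1} \<Longrightarrow> (G has_real_derivative h x) (at x within {-1..1})"
    unfolding h_def G_def g_Phi_def by (auto intro!: derivative_eq_intros d1)
  have G0: "G (-1) = 0" "G 1 = 0" using eq unfolding G_def g_Phi_def by auto
  have h0: "h (-1) = 0" "h 1 = 0" using b1 b2 unfolding h_def by auto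
  obtain e1 where e1: "e1 > 0" "\<forall>y\<in>{-1..1}. dist y (-1) < e1 \<longrightarrow> dist (\<Phi>2 y) (\<Phi>2 (-1)) < 1 - \<Phi>2 (-1)"
    proof -
    have "(-1::real) \<in> {-1..1}" by simp
    moreover have "1 - \<Phi>2 (-1) > 0" using b3 by simp
    ultimately show ?thesis using c2 unfolding continuous_on_iff using that by blast
  qed
  obtain e2 where e2: "e2 > 0" "\<forall>y\<in>{-1..1}. dist y 1 < e2 \<longrightarrow> dist (\<Phi>2 y) (\<Phi>2 1) < 1 - \<Phi>2 1"
    proof -
    have "(1::real) \<in> {-1..1}" by simp
    moreover have "1 - \<Phi>2 1 > 0" using b4 by simp
    ultimately show ?thesis using c2 unfolding continuous_on_iff using that by blast
  qed
  define \<delta> where "\<delta> = min (min e1 e2) 1 / 2"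
  have \<delta>: "\<delta> > 0" "\<delta> < e1" "\<delta> < e2" "\<delta> \<le> 1/2" unfolding \<delta>_def using e1 e2 by auto
  have L: "\<Phi>2 y < 1" if "-1 \<le> y" "y \<le> -1 + \<delta>" for y
    using e1(2)[rule_format, of y] that \<delta> by (auto simp: dist_real_def)
  have R: "\<Phi>2 y < 1" if "1 - \<delta> \<le> y" "y \<le> 1" for y
    using e2(2)[rule_format, of y] that \<delta> by (auto simp: dist_real_def)
  have GL: "G x > 0" if xx: "-1 < x" "x \<le> -1 + \<delta>" for x
  proof -
    obtain \<xi> where \<xi>: "\<xi> \<in> {-1<..<x}" "G x - G (-1) = h \<xi> * (x - (-1))"
      using mvt_gen[of "-1" x G h, OF _ _ _ dG] xx \<delta> by auto
    obtain \<eta> where \<eta>: "\<eta> \<in> {-1<..<\<xi>}" "h \<xi> - h (-1) = (1 - \<Phi>2 \<eta>) * (\<xi> - (-1))"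
      using mvt_gen[of "-1" \<xi> h "\<lambda>x. 1 - \<Phi>2 x", OF _ _ _ dh] xx \<delta> \<xi> by auto
    have "\<Phi>2 \<eta> < 1" using L[of \<eta>] \<eta> \<xi> xx by auto
    then have "h \<xi> > 0" using \<eta> \<xi> h0 by simp
    then show ?thesis using \<xi> G0 xx by simp
  qed
  have GR: "G x > 0" if xx: "1 - \<delta> \<le> x" "x < 1" for x
  proof -
    obtain \<xi> where \<xi>: "\<xi> \<in> {x<..<1}" "G 1 - G x = h \<xi> * (1 - x)"
      using mvt_gen[of x 1 G h, OF _ _ _ dG] xx \<delta> by auto
    obtain \<eta> where \<eta>: "\<eta> \<in> {\<xi><..<1}" "h 1 - h \<xi> = (1 - \<Phi>2 \<eta>) * (1 - \<xi>)"
      using mvt_gen[of \<xi> 1 h "\<lambda>x. 1 - \<Phi>2 x", OF _ _ _ dh] xx \<delta> \<xi> by auto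
    have "\<Phi>2 \<eta> < 1" using R[of \<eta>] \<eta> \<xi> xx by auto
    then have "(1 - \<Phi>2 \<eta>) * (1 - \<xi>) > 0" using \<eta> by simp
    then have "h \<xi> < 0" using \<eta> h0 by simp
    then have "h \<xi> * (1 - x) < 0" using xx by (simp add: mult_neg_pos)
    then show ?thesis using \<xi> G0 xx by simp
  qed
  show "\<forall>w\<in>{-1<..<1}. g_Phi \<Phi> w > 0"
  proof (rule ballI, rule ccontr)
    fix w assume w: "w \<in> {-1<..<1}" and nw: "\<not> g_Phi \<Phi> w > 0"
    then have Gw: "G w \<le> 0" unfolding G_def by simp
    define t1 where "t1 = -1 + \<delta>"
    define t3 where "t3 = 1 - \<delta>"
    have wt: "t1 < w" "w < t3" using GL[of w] GR[of w] Gw w unfolding t1_def t3_def by force+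
    have Gt: "G t1 > 0" "G t3 > 0" using GL[of t1] GR[of t3] \<delta> unfolding t1_def t3_def by auto
    have t: "-1 < t1" "t3 < 1" using \<delta> unfolding t1_def t3_def by auto
    obtain p where p: "p \<in> {t1<..<w}" "G w - G t1 = h p * (w - t1)"
      using mvt_gen[of t1 w G h, OF _ _ _ dG] wt t w by auto
    have hp: "h p < 0"
    proof -
      have "h p * (w - t1) < 0" using p Gw Gt by simp
      then show ?thesis using wt by (simp add: mult_less_0_iff)
    qed
    obtain q where q: "q \<in> {w<..<t3}" "G t3 - G w = h q * (t3 - w)"
      using mvt_gen[of w t3 G h, OF _ _ _ dG] wt t w by auto
    have hq: "h q > 0"
    proof -
      have "h q * (t3 - w) > 0" using q Gw Gt by simp
      then show ?thesis using wt by (simp add: zero_less_mult_iff)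
    qed
    obtain r1 where r1: "r1 \<in> {-1<..<p}" "h p - h (-1) = (1 - \<Phi>2 r1) * (p - (-1))"
      using mvt_gen[of "-1" p h "\<lambda>x. 1 - \<Phi>2 x", OF _ _ _ dh] p wt t w by auto
    have f1: "\<Phi>2 r1 > 1"
    proof -
      have "(1 - \<Phi>2 r1) * (p - (-1)) < 0" using r1 hp h0 by simp
      then show ?thesis using r1 by (simp add: mult_less_0_iff)
    qed
    obtain r2 where r2: "r2 \<in> {p<..<q}" "h q - h p = (1 - \<Phi>2 r2) * (q - p)"
      using mvt_gen[of p q h "\<lambda>x. 1 - \<Phi>2 x", OF _ _ _ dh] p q wt t w by auto
    have f2: "\<Phi>2 r2 < 1"
    proof -
      have "(1 - \<Phi>2 r2) * (q - p) > 0" using r2 hp hq by simp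
      then show ?thesis using r2 by (simp add: zero_less_mult_iff)
    qed
    obtain r3 where r3: "r3 \<in> {q<..<1}" "h 1 - h q = (1 - \<Phi>2 r3) * (1 - q)"
      using mvt_gen[of q 1 h "\<lambda>x. 1 - \<Phi>2 x", OF _ _ _ dh] q wt t w by auto
    have f3: "\<Phi>2 r3 > 1"
    proof -
      have "(1 - \<Phi>2 r3) * (1 - q) < 0" using r3 hq h0 by simp
      then show ?thesis using r3 by (simp add: mult_less_0_iff)
    qed
    have ord: "-1 < r1" "r1 < r2" "r2 < r3" "r3 < 1" using r1 r2 r3 p q by auto
    show False
    proof (cases "r2 \<le> ws")
      case True
      then have "\<Phi>2 r1 \<le> \<Phi>2 r2" using mono_onD[OF ws(2), of r1 r2] ord by auto
      then show False using f1 f2 by simp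
    next
      case False
      then have "\<Phi>2 r3 \<le> \<Phi>2 r2" using monotone_onD[OF ws(3), of r2 r3] ord by auto
      then show False using f3 f2 by simp
    qed
  qed
qed

end
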